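(* Let $P$ be a poset, let $\mathbf{JF}_P$ be the set of frame-generating join-specifications for $P$ and $\mathbf{JF}^+_P$ the set of maximal frame-generating join-specifications for $P$, both ordered by inclusion. (1) $\mathbf{JF}_P$ is a complete lattice (equivalently, as a thin category it is complete and cocomplete). Non-empty joins are given by unions, the top element is $\bigcup_{\mathcal{U}\in\mathbf{JF}_P}\mathcal{U}$ and the bottom element is $B_P$. (2) $\mathbf{JF}^+_P$ is a complete lattice (equivalently, complete and cocomplete). Non-empty meets are given by intersections, the top element is $\bigcup_{\mathcal{U}\in\mathbf{JF}_P}\mathcal{U}$ and the bottom element is $B_P^+$.
   Context: A join-specification for $P$ is a set $\mathcal{U}\subseteq\wp(P)$ such that $\bigvee S$ exists in $P$ for every $S\in\mathcal{U}$, and $\{p\}\in\mathcal{U}$ for every $p\in P$. A $\mathcal{U}$-ideal is a down-closed $C\subseteq P$ such that $\bigvee S\in C$ whenever $S\in\mathcal{U}$, $S\subseteq C$. $\mathcal{I}_{\mathcal{U}}$ is the complete lattice of $\mathcal{U}$-ideals ordered by inclusion; $\Gamma_{\mathcal{U}}(S)$ is the smallest $\mathcal{U}$-ideal containing $S$. $\mathcal{U}^+=\{S\subseteq P:\bigvee S\text{ exists and }\bigvee S\in\Gamma_{\mathcal{U}}(S)\}$; $\mathcal{U}$ is maximal if $\mathcal{U}=\mathcal{U}^+$; $\mathcal{U}$ is frame-generating if $\mathcal{I}_{\mathcal{U}}$ is a frame. $B_P$ is the set of all singleton subsets of $P$, and $B_P^+=(B_P)^+$. *)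

theory Defs
  imports Main
begin

text \<open>The poset P is the carrier of a type of class order (P = UNIV).\<close>

definition is_join :: "'a::order set \<Rightarrow> 'a \<Rightarrow> bool" where
  "is_join S x \<longleftrightarrow> (\<forall>s\<in>S. s \<le> x) \<and> (\<forall>y. (\<forall>s\<in>S. s \<le> y) \<longrightarrow> x \<le> y)"

definition has_join :: "'a::order set \<Rightarrow> bool" where
  "has_join S \<longleftrightarrow> (\<exists>x. is_join S x)"

definition join :: "'a::order set \<Rightarrow> 'a" where
  "join S = (THE x. is_join S x)"

definition join_spec :: "'a::order set set \<Rightarrow> bool" where
  "join_spec U \<longleftrightarrow> (\<forall>S\<in>U. has_join S) \<and> (\<forall>p. {p} \<in> U)"

definition U_ideal :: "'a::order set set \<Rightarrow> 'a set \<Rightarrow> bool" where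
  "U_ideal U C \<longleftrightarrow> (\<forall>x y. x \<in> C \<longrightarrow> y \<le> x \<longrightarrow> y \<in> C)
                   \<and> (\<forall>S\<in>U. S \<subseteq> C \<longrightarrow> join S \<in> C)"

definition Gamma :: "'a::order set set \<Rightarrow> 'a set \<Rightarrow> 'a set" where
  "Gamma U S = \<Inter>{C. U_ideal U C \<and> S \<subseteq> C}"

definition U_plus :: "'a::order set set \<Rightarrow> 'a set set" where
  "U_plus U = {S. has_join S \<and> join S \<in> Gamma U S}"

definition maximal_spec :: "'a::order set set \<Rightarrow> bool" where
  "maximal_spec U \<longleftrightarrow> U = U_plus U"

text \<open>The lattice of U-ideals (meets = intersections, joins = Gamma of unions)
  is a frame: binary meets distribute over arbitrary joins.\<close>
definition frame_generating :: "'a::order set set \<Rightarrow> bool" where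
  "frame_generating U \<longleftrightarrow>
     (\<forall>A F. U_ideal U A \<and> (\<forall>B\<in>F. U_ideal U B) \<longrightarrow>
        A \<inter> Gamma U (\<Union>F) = Gamma U (\<Union>B\<in>F. A \<inter> B))"

definition B_P :: "'a::order set set" where
  "B_P = {S. \<exists>p. S = {p}}"

definition JF :: "'a::order set set set" where
  "JF = {U. join_spec U \<and> frame_generating U}"

definition JF_plus :: "'a::order set set set" where
  "JF_plus = {U. join_spec U \<and> frame_generating U \<and> maximal_spec U}"

definition complete_lattice_incl :: "'b set set \<Rightarrow> bool" where
  "complete_lattice_incl A \<longleftrightarrow>
     (\<forall>F\<subseteq>A. \<exists>x\<in>A. (\<forall>y\<in>F. y \<subseteq> x) \<and> (\<forall>z\<in>A. (\<forall>y\<in>F. y \<subseteq> z) \<longrightarrow> x \<subseteq> z))"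

end

theory Submission
  imports Defs
begin

lemma is_join_unique: "is_join S x \<Longrightarrow> is_join S y \<Longrightarrow> x = (y::'a::order)"
  unfolding is_join_def by (meson order_antisym)

lemma join_eq: "is_join S x \<Longrightarrow> join S = x"
  unfolding join_def using is_join_unique by blast

lemma has_join_is: "has_join S \<Longrightarrow> is_join S (join S)"
  unfolding has_join_def using join_eq by metis

lemma Gamma_ideal: "U_ideal U (Gamma U S)"
  unfolding U_ideal_def Gamma_def by blast

lemma Gamma_sub: "S \<subseteq> Gamma U S"
  unfolding Gamma_def by blast

lemma Gamma_least: "U_ideal U C \<Longrightarrow> S \<subseteq> C \<Longrightarrow> Gamma U S \<subseteq> C"
  unfolding Gamma_def by blast

lemma Gamma_mono_set: "S \<subseteq> T \<Longrightarrow> Gamma U S \<subseteq> Gamma U T"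
  unfolding Gamma_def by blast

lemma ideal_anti: "U \<subseteq> V \<Longrightarrow> U_ideal V C \<Longrightarrow> U_ideal U C"
  unfolding U_ideal_def by blast

lemma Gamma_mono_U: assumes "U \<subseteq> V" shows "Gamma U S \<subseteq> Gamma V S"
proof -
  have "\<And>C. U_ideal V C \<and> S \<subseteq> C \<Longrightarrow> Gamma U S \<subseteq> C"
    using Gamma_least ideal_anti[OF assms] by blast
  then show ?thesis unfolding Gamma_def[of V] by (rule Inter_greatest) simp
qed

lemma ideal_down: "U_ideal U C \<Longrightarrow> x \<in> C \<Longrightarrow> y \<le> x \<Longrightarrow> y \<in> C"
  unfolding U_ideal_def by blast

lemma ideal_join: "U_ideal U C \<Longrightarrow> S \<in> U \<Longrightarrow> S \<subseteq> C \<Longrightarrow> join S \<in> C"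
  unfolding U_ideal_def by blast

lemma principal_ideal:
  assumes "join_spec U" shows "U_ideal U {y. y \<le> (p::'a::order)}"
  unfolding U_ideal_def
proof (intro conjI allI impI ballI)
  fix x y :: 'a assume "x \<in> {y. y \<le> p}" "y \<le> x" thus "y \<in> {y. y \<le> p}" by auto
next
  fix S assume "S \<in> U" "S \<subseteq> {y. y \<le> p}"
  then have "is_join S (join S)" using assms has_join_is unfolding join_spec_def by blast
  thus "join S \<in> {y. y \<le> p}" using \<open>S \<subseteq> _\<close> unfolding is_join_def by auto
qed

lemma Gamma_below:
  assumes "join_spec U" "\<forall>d\<in>D. d \<le> u" shows "Gamma U D \<subseteq> {y. y \<le> (u::'a::order)}"
  using Gamma_least[OF principal_ideal[OF assms(1)]] assms(2) by blast

definition DD :: "'a::order \<Rightarrow> 'a set \<Rightarrow> 'a set" where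
  "DD p S = {q. q \<le> p \<and> (\<exists>s\<in>S. q \<le> s)}"

definition dist :: "'a::order set set \<Rightarrow> bool" where
  "dist U \<longleftrightarrow> (\<forall>S\<in>U. \<forall>p. p \<le> join S \<longrightarrow> p \<in> Gamma U (DD p S))"

lemma fg_dist:
  assumes js: "join_spec U" and fg: "frame_generating U" shows "dist U"
  unfolding dist_def
proof (intro ballI allI impI)
  fix S p assume S: "S \<in> U" and p: "p \<le> join S"
  define A where "A = {y. y \<le> p}"
  define F where "F = (\<lambda>s. {y. y \<le> s}) ` S"
  have A: "U_ideal U A" unfolding A_def by (rule principal_ideal[OF js])
  have F: "\<forall>B\<in>F. U_ideal U B" unfolding F_def using principal_ideal[OF js] by blast
  have "S \<subseteq> \<Union>F" unfolding F_def by auto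
  then have "S \<subseteq> Gamma U (\<Union>F)" using Gamma_sub by blast
  then have "join S \<in> Gamma U (\<Union>F)" using ideal_join[OF Gamma_ideal S] by blast
  then have "p \<in> Gamma U (\<Union>F)" using ideal_down[OF Gamma_ideal] p by blast
  moreover have "p \<in> A" unfolding A_def by simp
  ultimately have "p \<in> A \<inter> Gamma U (\<Union>F)" by blast
  also have "\<dots> = Gamma U (\<Union>B\<in>F. A \<inter> B)" using fg A F unfolding frame_generating_def by blast
  also have "(\<Union>B\<in>F. A \<inter> B) = DD p S" unfolding A_def F_def DD_def by auto
  finally show "p \<in> Gamma U (DD p S)" .
qed

lemma dist_fg:
  assumes js: "join_spec U" and d: "dist U" shows "frame_generating U"
  unfolding frame_generating_def
proof (intro allI impI)
  fix A F assume H: "U_ideal U A \<and> (\<forall>B\<in>F. U_ideal U B)"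
  then have A: "U_ideal U A" and F: "\<forall>B\<in>F. U_ideal U B" by auto
  define G where "G = Gamma U (\<Union>B\<in>F. A \<inter> B)"
  have G: "U_ideal U G" unfolding G_def by (rule Gamma_ideal)
  have "G \<subseteq> A" unfolding G_def by (rule Gamma_least[OF A]) blast
  moreover have "G \<subseteq> Gamma U (\<Union>F)" unfolding G_def by (rule Gamma_mono_set) blast
  ultimately have sup: "G \<subseteq> A \<inter> Gamma U (\<Union>F)" by blast
  define C where "C = {x. \<forall>y. y \<le> x \<and> y \<in> A \<longrightarrow> y \<in> G}"
  have C: "U_ideal U C"
    unfolding U_ideal_def
  proof (intro conjI allI impI ballI)
    fix x y assume "x \<in> C" "y \<le> x" thus "y \<in> C" unfolding C_def using order_trans by blast
  next
    fix S assume S: "S \<in> U" and SC: "S \<subseteq> C"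
    show "join S \<in> C" unfolding C_def mem_Collect_eq
    proof (intro allI impI)
      fix p assume pp: "p \<le> join S \<and> p \<in> A"
      have "DD p S \<subseteq> G"
      proof
        fix q assume "q \<in> DD p S"
        then obtain s where "q \<le> p" "s \<in> S" "q \<le> s" unfolding DD_def by blast
        then have "q \<in> A" using ideal_down[OF A] pp by blast
        thus "q \<in> G" using SC \<open>s \<in> S\<close> \<open>q \<le> s\<close> unfolding C_def by blast
      qed
      then have "Gamma U (DD p S) \<subseteq> G" by (rule Gamma_least[OF G])
      thus "p \<in> G" using d S pp unfolding dist_def by blast
    qed
  qed
  have "\<Union>F \<subseteq> C" unfolding C_def G_def
  proof (clarify)
    fix x B y assume "x \<in> B" "B \<in> F" "y \<le> x" "y \<in> A"
    then have "y \<in> A \<inter> B" using ideal_down F by blast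
    then have "y \<in> (\<Union>B\<in>F. A \<inter> B)" using \<open>B \<in> F\<close> by blast
    then show "y \<in> Gamma U (\<Union>B\<in>F. A \<inter> B)" using Gamma_sub by (rule subsetD[rotated])
  qed
  then have "Gamma U (\<Union>F) \<subseteq> C" by (rule Gamma_least[OF C])
  then have "A \<inter> Gamma U (\<Union>F) \<subseteq> G" unfolding C_def by auto
  with sup show "A \<inter> Gamma U (\<Union>F) = G" by blast
qed

lemma fg_iff: "join_spec U \<Longrightarrow> frame_generating U \<longleftrightarrow> dist U"
  using fg_dist dist_fg by blast

lemma JF_iff: "U \<in> JF \<longleftrightarrow> join_spec U \<and> dist U"
  unfolding JF_def using fg_iff by blast

lemma union_JF:
  assumes "F \<subseteq> JF" "F \<noteq> {}" shows "\<Union>F \<in> JF"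
proof -
  have js: "join_spec (\<Union>F)" using assms unfolding JF_def join_spec_def by blast
  have "dist (\<Union>F)" unfolding dist_def
  proof (intro ballI allI impI)
    fix S p assume "S \<in> \<Union>F" "p \<le> join S"
    then obtain U where U: "U \<in> F" "S \<in> U" by blast
    then have "dist U" using assms JF_iff by blast
    then have "p \<in> Gamma U (DD p S)" using U \<open>p \<le> join S\<close> unfolding dist_def by blast
    thus "p \<in> Gamma (\<Union>F) (DD p S)" using Gamma_mono_U[of U "\<Union>F"] U by blast
  qed
  with js show ?thesis using JF_iff by blast
qed

lemma BP_JF: "B_P \<in> JF"
proof -
  have hj: "is_join {p} p" for p :: 'a unfolding is_join_def by auto
  have js: "join_spec (B_P :: 'a set set)" unfolding join_spec_def B_P_def has_join_def
    using hj by blast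
  have "dist (B_P :: 'a set set)" unfolding dist_def
  proof (intro ballI allI impI)
    fix S and p :: 'a assume "S \<in> B_P" "p \<le> join S"
    then obtain r where r: "S = {r}" unfolding B_P_def by blast
    then have "p \<le> r" using \<open>p \<le> join S\<close> join_eq[OF hj] by simp
    then have "p \<in> DD p S" unfolding DD_def r by simp
    thus "p \<in> Gamma B_P (DD p S)" using Gamma_sub by blast
  qed
  with js show ?thesis using JF_iff by blast
qed

lemma JF_BP_sub: "U \<in> JF \<Longrightarrow> B_P \<subseteq> U"
  unfolding JF_def join_spec_def B_P_def by blast

lemma U_sub_plus: "join_spec U \<Longrightarrow> U \<subseteq> U_plus U"
proof
  fix S assume "join_spec U" "S \<in> U"
  then have "has_join S" unfolding join_spec_def by blast
  moreover have "join S \<in> Gamma U S" using ideal_join[OF Gamma_ideal \<open>S \<in> U\<close> Gamma_sub] .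
  ultimately show "S \<in> U_plus U" unfolding U_plus_def by blast
qed

lemma plus_ideal: "join_spec U \<Longrightarrow> U_ideal (U_plus U) C \<longleftrightarrow> U_ideal U C"
proof
  assume "join_spec U" "U_ideal (U_plus U) C"
  then show "U_ideal U C" using U_sub_plus unfolding U_ideal_def by blast
next
  assume "U_ideal U C"
  then show "U_ideal (U_plus U) C" unfolding U_ideal_def
  proof (intro conjI allI impI ballI)
    fix S assume "S \<in> U_plus U" "S \<subseteq> C"
    then have "join S \<in> Gamma U S" unfolding U_plus_def by blast
    thus "join S \<in> C" using Gamma_least[OF \<open>U_ideal U C\<close> \<open>S \<subseteq> C\<close>] by blast
  qed (auto simp: U_ideal_def)
qed

lemma plus_Gamma: assumes "join_spec U" shows "Gamma (U_plus U) = Gamma U"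
proof
  fix S show "Gamma (U_plus U) S = Gamma U S" unfolding Gamma_def using plus_ideal[OF assms] by simp
qed

lemma plus_fg: assumes "join_spec U" shows "frame_generating (U_plus U) \<longleftrightarrow> frame_generating U"
  unfolding frame_generating_def plus_Gamma[OF assms] plus_ideal[OF assms] ..

lemma plus_js: "join_spec U \<Longrightarrow> join_spec (U_plus U)"
  using U_sub_plus unfolding join_spec_def U_plus_def by blast

lemma plus_max: assumes "join_spec U" shows "maximal_spec (U_plus U)"
  unfolding maximal_spec_def U_plus_def[of "U_plus U"] plus_Gamma[OF assms]
  by (simp add: U_plus_def)

lemma plus_JF_plus: "U \<in> JF \<Longrightarrow> U_plus U \<in> JF_plus"
  unfolding JF_def JF_plus_def using plus_js plus_fg plus_max by blast

lemma plus_mono: "U \<subseteq> V \<Longrightarrow> U_plus U \<subseteq> U_plus V"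
  unfolding U_plus_def using Gamma_mono_U by blast

lemma JF_plus_JF: "U \<in> JF_plus \<Longrightarrow> U \<in> JF"
  unfolding JF_def JF_plus_def by blast

lemma JF_plus_eq: "U \<in> JF_plus \<Longrightarrow> U_plus U = U"
  unfolding JF_plus_def maximal_spec_def by auto

lemma max_DD:
  assumes U: "U \<in> JF_plus" and S: "S \<in> U" and p: "p \<le> join S"
  shows "DD p S \<in> U \<and> is_join (DD p S) p"
proof -
  have js: "join_spec U" using U unfolding JF_plus_def by blast
  have d: "dist U" using U JF_plus_JF JF_iff by blast
  then have pg: "p \<in> Gamma U (DD p S)" using S p unfolding dist_def by blast
  have ij: "is_join (DD p S) p" unfolding is_join_def
  proof (intro conjI ballI allI impI)
    fix s assume "s \<in> DD p S" thus "s \<le> p" unfolding DD_def by blast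
  next
    fix y assume "\<forall>s\<in>DD p S. s \<le> y"
    then have "Gamma U (DD p S) \<subseteq> {z. z \<le> y}" by (rule Gamma_below[OF js])
    thus "p \<le> y" using pg by blast
  qed
  have hj: "has_join (DD p S)" unfolding has_join_def using ij by (rule exI)
  have je: "join (DD p S) = p" using ij by (rule join_eq)
  have "DD p S \<in> U_plus U" unfolding U_plus_def mem_Collect_eq je using hj pg by (rule conjI)
  then have "DD p S \<in> U" unfolding JF_plus_eq[OF U] .
  then show ?thesis using ij by (rule conjI)
qed

lemma inter_JF_plus:
  assumes F: "F \<subseteq> JF_plus" "F \<noteq> {}" shows "\<Inter>F \<in> JF_plus"
proof -
  have js: "join_spec (\<Inter>F)" unfolding join_spec_def
  proof (intro conjI ballI allI)
    obtain U0 where U0: "U0 \<in> F" using F by blast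
    then have "join_spec U0" using F unfolding JF_plus_def by blast
    fix S assume "S \<in> \<Inter>F"
    then have "S \<in> U0" using U0 by blast
    thus "has_join S" using \<open>join_spec U0\<close> unfolding join_spec_def by blast
  next
    fix p
    have "{p} \<in> U" if "U \<in> F" for U using F that unfolding JF_plus_def join_spec_def by blast
    thus "{p} \<in> \<Inter>F" by blast
  qed
  have d: "dist (\<Inter>F)" unfolding dist_def
  proof (intro ballI allI impI)
    fix S p assume S: "S \<in> \<Inter>F" and p: "p \<le> join S"
    obtain U0 where "U0 \<in> F" using F by blast
    have "DD p S \<in> U" if "U \<in> F" for U using max_DD[of U S p] S p F that by blast
    then have DI: "DD p S \<in> \<Inter>F" by blast
    have ij: "is_join (DD p S) p" using max_DD[of U0 S p] S p F \<open>U0 \<in> F\<close> by blast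
    have "join (DD p S) \<in> Gamma (\<Inter>F) (DD p S)"
      by (rule ideal_join[OF Gamma_ideal DI Gamma_sub])
    thus "p \<in> Gamma (\<Inter>F) (DD p S)" using join_eq[OF ij] by simp
  qed
  have jf: "\<Inter>F \<in> JF" using js d JF_iff by blast
  have "U_plus (\<Inter>F) \<subseteq> \<Inter>F"
  proof
    fix S assume "S \<in> U_plus (\<Inter>F)"
    then have "S \<in> U_plus U" if "U \<in> F" for U using plus_mono[of "\<Inter>F" U] that by blast
    thus "S \<in> \<Inter>F" using JF_plus_eq F by blast
  qed
  then have "maximal_spec (\<Inter>F)" unfolding maximal_spec_def using U_sub_plus[OF js] by blast
  with jf show ?thesis unfolding JF_def JF_plus_def by simp
qed

theorem theorem5p5:
  shows "complete_lattice_incl (JF :: 'a::order set set set)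
       \<and> (\<forall>F. F \<subseteq> (JF :: 'a set set set) \<and> F \<noteq> {} \<longrightarrow> \<Union>F \<in> JF)
       \<and> \<Union>(JF :: 'a set set set) \<in> JF \<and> (\<forall>U\<in>(JF :: 'a set set set). U \<subseteq> \<Union>JF)
       \<and> (B_P :: 'a set set) \<in> JF \<and> (\<forall>U\<in>(JF :: 'a set set set). B_P \<subseteq> U)
       \<and> complete_lattice_incl (JF_plus :: 'a set set set)
       \<and> (\<forall>F. F \<subseteq> (JF_plus :: 'a set set set) \<and> F \<noteq> {} \<longrightarrow> \<Inter>F \<in> JF_plus)
       \<and> \<Union>(JF :: 'a set set set) \<in> JF_plus \<and> (\<forall>U\<in>(JF_plus :: 'a set set set). U \<subseteq> \<Union>JF)
       \<and> U_plus (B_P :: 'a set set) \<in> JF_plus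
       \<and> (\<forall>U\<in>(JF_plus :: 'a set set set). U_plus B_P \<subseteq> U)"
proof -
  have uJF: "\<Union>(JF :: 'a set set set) \<in> JF" using union_JF[of JF] BP_JF by blast
  have un2: "B_P \<union> \<Union>F \<in> (JF :: 'a set set set)" if "F \<subseteq> JF" for F
    using union_JF[of "insert B_P F"] BP_JF that by auto
  have c1: "complete_lattice_incl (JF :: 'a set set set)"
    unfolding complete_lattice_incl_def
  proof (intro allI impI)
    fix F assume F: "F \<subseteq> (JF :: 'a set set set)"
    show "\<exists>x\<in>JF. (\<forall>y\<in>F. y \<subseteq> x) \<and> (\<forall>z\<in>JF. (\<forall>y\<in>F. y \<subseteq> z) \<longrightarrow> x \<subseteq> z)"
      using un2[OF F] JF_BP_sub by (intro bexI[of _ "B_P \<union> \<Union>F"]) auto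
  qed
  have c2: "complete_lattice_incl (JF_plus :: 'a set set set)"
    unfolding complete_lattice_incl_def
  proof (intro allI impI)
    fix F assume F: "F \<subseteq> (JF_plus :: 'a set set set)"
    then have F': "F \<subseteq> JF" using JF_plus_JF by blast
    have js: "join_spec (B_P \<union> \<Union>F)" using un2[OF F'] unfolding JF_def by blast
    show "\<exists>x\<in>JF_plus. (\<forall>y\<in>F. y \<subseteq> x) \<and> (\<forall>z\<in>JF_plus. (\<forall>y\<in>F. y \<subseteq> z) \<longrightarrow> x \<subseteq> z)"
    proof (intro bexI[of _ "U_plus (B_P \<union> \<Union>F)"] conjI ballI impI)
      show "U_plus (B_P \<union> \<Union>F) \<in> JF_plus" using plus_JF_plus un2[OF F'] by blast
      fix y assume "y \<in> F" thus "y \<subseteq> U_plus (B_P \<union> \<Union>F)" using U_sub_plus[OF js] by blast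
    next
      fix z assume z: "z \<in> JF_plus" "\<forall>y\<in>F. y \<subseteq> z"
      then have "B_P \<union> \<Union>F \<subseteq> z" using JF_BP_sub JF_plus_JF by blast
      then show "U_plus (B_P \<union> \<Union>F) \<subseteq> z" using plus_mono JF_plus_eq[OF z(1)] by blast
    qed
  qed
  have top2: "\<Union>(JF :: 'a set set set) \<in> JF_plus"
  proof -
    have js: "join_spec (\<Union>(JF :: 'a set set set))" using uJF unfolding JF_def by blast
    have "U_plus (\<Union>(JF :: 'a set set set)) \<in> JF" using plus_JF_plus[OF uJF] JF_plus_JF by blast
    then have "U_plus (\<Union>(JF :: 'a set set set)) \<subseteq> \<Union>JF" by blast
    then have "maximal_spec (\<Union>(JF :: 'a set set set))"
      unfolding maximal_spec_def using U_sub_plus[OF js] by blast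
    with uJF show ?thesis unfolding JF_def JF_plus_def by blast
  qed
  have bp2: "\<forall>U\<in>(JF_plus :: 'a set set set). U_plus B_P \<subseteq> U"
  proof
    fix U :: "'a set set" assume U: "U \<in> JF_plus"
    then have "B_P \<subseteq> U" using JF_BP_sub JF_plus_JF by blast
    then show "U_plus B_P \<subseteq> U" using plus_mono[of B_P U] JF_plus_eq[OF U] by blast
  qed
  have sub1: "\<forall>U\<in>(JF :: 'a set set set). U \<subseteq> \<Union>JF" by blast
  have sub2: "\<forall>U\<in>(JF_plus :: 'a set set set). U \<subseteq> \<Union>JF" using JF_plus_JF by blast
  have u1: "\<forall>F. F \<subseteq> (JF :: 'a set set set) \<and> F \<noteq> {} \<longrightarrow> \<Union>F \<in> JF"
    using union_JF by blast
  have i1: "\<forall>F. F \<subseteq> (JF_plus :: 'a set set set) \<and> F \<noteq> {} \<longrightarrow> \<Inter>F \<in> JF_plus"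
    using inter_JF_plus by blast
  have b1: "\<forall>U\<in>(JF :: 'a set set set). B_P \<subseteq> U" using JF_BP_sub by blast
  show ?thesis
    using c1 c2 u1 uJF BP_JF b1 i1 top2 plus_JF_plus[OF BP_JF] bp2 sub1 sub2
    by (intro conjI)
qed

end
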